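(* Let $\{X_i,i\in I\}$ be a family of random variables and $L$ a slowly varying function on $[0,\infty)$ which is positive, continuous on $[0,\infty)$, differentiable on $[A,\infty)$ for some $A>0$, and satisfies $\lim_{x\to\infty}xL'(x)/L(x)=0$. If for some $p>0$, $$\sup_{i\in I}\mathbb{E}\left(|X_i|^pL(|X_i|)\log(|X_i|)\log^2(\log(|X_i|))\right)<\infty,$$ then there exists a nonnegative random variable $X$ with distribution function $F(x)=1-\sup_{i\in I}\mathbb{P}(|X_i|>x)$, $x\in\mathbb{R}$, such that $\{X_i,i\in I\}$ is stochastically dominated by $X$ and $\mathbb{E}\left(X^pL(X)\right)<\infty$.
   Context: $\log(x)$ denotes the natural logarithm of $\max\{x,e\}$, $x\ge0$. A function $L$ is slowly varying if it is positive and measurable on $[A,\infty)$ for some $A>0$ and $\lim_{x\to\infty}L(\lambda x)/L(x)=1$ for each $\lambda>0$. A family $\{X_i,i\in I\}$ is stochastically dominated by a random variable $X$ if $\sup_{i\in I}\mathbb{P}(|X_i|>t)\le\mathbb{P}(|X|>t)$ for all $t\ge0$. *)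

theory Defs
  imports "HOL-Probability.Probability"
begin

text \<open>The paper's logarithm: natural log of max(x, e).\<close>
definition Log :: "real \<Rightarrow> real" where
  "Log x = ln (max x (exp 1))"

definition slowly_varying :: "(real \<Rightarrow> real) \<Rightarrow> bool" where
  "slowly_varying L \<longleftrightarrow>
     (\<exists>A>0. (\<forall>x\<ge>A. L x > 0) \<and> L \<in> borel_measurable (restrict_space borel {A..})) \<and>
     (\<forall>c>0. ((\<lambda>x. L (c * x) / L x) \<longlongrightarrow> 1) at_top)"

definition stoch_dominated ::
    "'a measure \<Rightarrow> 'i set \<Rightarrow> ('i \<Rightarrow> 'a \<Rightarrow> real) \<Rightarrow> 'b measure \<Rightarrow> ('b \<Rightarrow> real) \<Rightarrow> bool" where
  "stoch_dominated M I X N Y \<longleftrightarrow>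
     (\<forall>t\<ge>0. (SUP i\<in>I. measure M {\<omega>\<in>space M. \<bar>X i \<omega>\<bar> > t})
              \<le> measure N {\<omega>\<in>space N. \<bar>Y \<omega>\<bar> > t})"

end

theory Submission
  imports Defs
begin

lemma ennreal_term_le_suminf: "(f::nat \<Rightarrow> ennreal) k \<le> suminf f"
  using sum_le_suminf[OF summableI, of "{k}" f] by simp

lemma summable_inv_sq1: "summable (\<lambda>n::nat. 1 / (real n + 1)^2)"
proof -
  have "summable (\<lambda>n::nat. inverse (real (Suc n) ^ 2))"
    using inverse_power_summable[of 2, where 'a=real] summable_Suc_iff by (subst summable_Suc_iff) auto
  then show ?thesis by (simp add: field_simps)
qed

lemma summable_loglog: "summable (\<lambda>m::nat. 1 / (real m * (ln (real m) + 1)^2))"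
proof (subst condensation_test)
  show "1 / (real (Suc m) * (ln (real (Suc m)) + 1)^2) \<le> 1 / (real m * (ln (real m) + 1)^2)"
    if "0 < m" for m
  proof -
    have l0: "0 \<le> ln (real m)" using that by simp
    have l1: "ln (real m) \<le> ln (real (Suc m))" using that by simp
    have "real m * (ln (real m) + 1)^2 \<le> real (Suc m) * (ln (real (Suc m)) + 1)^2"
      using l0 l1 by (intro mult_mono power_mono) auto
    moreover have l2: "0 < ln (real m) + 1" using l0 by linarith
    moreover have "0 < real m * (ln (real m) + 1)^2" using that l2 by (intro mult_pos_pos zero_less_power) auto
    ultimately show ?thesis by (intro divide_left_mono) auto
  qed
  show "0 \<le> 1 / (real n * (ln (real n) + 1)^2)" for n
    by (cases "n = 0") (auto intro!: divide_nonneg_pos add_nonneg_pos)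
  show "summable (\<lambda>n::nat. 2^n * (1 / (real (2^n) * (ln (real (2^n)) + 1)^2)))"
  proof (rule summable_comparison_test'[OF summable_mult[OF summable_inv_sq1, of "1 / (ln 2)^2"]])
    fix n :: nat
    have ln2: "0 < ln (2::real)" "ln (2::real) < 1" using ln_2_less_1 by auto
    have e: "2^n * (1 / (real (2^n) * (ln (real (2^n)) + 1)^2)) = 1 / (real n * ln 2 + 1)^2"
      by (simp add: ln_realpow)
    have "ln 2 * (real n + 1) \<le> real n * ln 2 + 1" using ln2 by (simp add: algebra_simps)
    moreover have pos: "0 < real n * ln 2 + 1" using ln2 by (intro add_nonneg_pos mult_nonneg_nonneg) auto
    ultimately have "(ln 2 * (real n + 1))^2 \<le> (real n * ln 2 + 1)^2"
      using ln2 by (intro power_mono) auto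
    hence "1 / (real n * ln 2 + 1)^2 \<le> 1 / (ln 2 * (real n + 1))^2"
      using ln2 pos by (intro divide_left_mono) (auto intro!: mult_pos_pos zero_less_power)
    thus "norm (2^n * (1 / (real (2^n) * (ln (real (2^n)) + 1)^2))) \<le> 1 / (ln 2)^2 * (1 / (real n + 1)^2)"
      using ln2 by (subst e) (simp add: power_mult_distrib)
  qed
qed

lemma h_mono:
  fixes L :: "real \<Rightarrow> real" and A p :: real
  assumes pos: "\<And>x. x \<ge> 0 \<Longrightarrow> L x > 0" and A: "A > 0"
    and diff: "\<And>x. x \<ge> A \<Longrightarrow> L differentiable (at x)"
    and lim: "((\<lambda>x. x * deriv L x / L x) \<longlongrightarrow> 0) at_top" and p: "p > 0"
  shows "\<exists>B>0. \<forall>x y. B \<le> x \<longrightarrow> x \<le> y \<longrightarrow> x powr p * L x \<le> y powr p * L y"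
proof -
  have "eventually (\<lambda>x. - p / 2 < x * deriv L x / L x) at_top"
    using p by (intro order_tendstoD(1)[OF lim]) auto
  then obtain B0 where B0: "\<And>x. x \<ge> B0 \<Longrightarrow> - p / 2 < x * deriv L x / L x"
    by (auto simp: eventually_at_top_linorder)
  define B where "B = max (max A B0) 1"
  have der: "\<exists>d. ((\<lambda>z. z powr p * L z) has_real_derivative d) (at z) \<and> d > 0" if z: "z \<ge> B" for z
  proof -
    have z0: "z > 0" "z \<ge> A" "z \<ge> B0" using z A by (auto simp: B_def)
    have dL: "(L has_real_derivative deriv L z) (at z)"
      using diff[OF z0(2)] DERIV_deriv_iff_real_differentiable by blast
    have D: "((\<lambda>z. z powr p * L z) has_real_derivative
               (p * z powr (p - 1)) * L z + z powr p * deriv L z) (at z)"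
      using DERIV_mult[OF has_real_derivative_powr[OF z0(1), of p] dL] by (simp add: mult.commute)
    define q where "q = z powr (p - 1)"
    have q: "q > 0" using z0 by (simp add: q_def)
    have zp: "z powr p = z * q" unfolding q_def using z0
      by (simp add: powr_diff)
    have Lz: "L z > 0" using pos z0 by auto
    have "- p / 2 < z * deriv L z / L z" using B0 z0 by auto
    hence "- p / 2 * L z < z * deriv L z" using Lz by (simp add: field_simps)
    hence "p * L z + z * deriv L z > p * L z / 2" by linarith
    moreover have "p * L z / 2 > 0" using p Lz by simp
    ultimately have "q * (p * L z + z * deriv L z) > 0" using q by simp
    moreover have "(p * z powr (p - 1)) * L z + z powr p * deriv L z = q * (p * L z + z * deriv L z)"
      unfolding zp q_def by (simp add: algebra_simps)
    ultimately show ?thesis using D by metis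
  qed
  show ?thesis
  proof (intro exI[of _ B] conjI allI impI)
    show "B > 0" by (simp add: B_def)
    fix x y assume xy: "B \<le> x" "x \<le> y"
    show "x powr p * L x \<le> y powr p * L y"
    proof (cases "x = y")
      case False
      hence "x < y" using xy by simp
      from DERIV_pos_imp_increasing[OF this] der xy show ?thesis
        by (metis (no_types, lifting) order.trans less_imp_le)
    qed simp
  qed
qed

theorem proposition3p2:
  fixes M :: "'a measure" and I :: "'i set" and X :: "'i \<Rightarrow> 'a \<Rightarrow> real"
    and L :: "real \<Rightarrow> real" and A p :: real
  assumes "prob_space M"
    and "I \<noteq> {}"
    and "\<And>i. i \<in> I \<Longrightarrow> X i \<in> borel_measurable M"
    and "slowly_varying L"
    and "\<And>x. x \<ge> 0 \<Longrightarrow> L x > 0"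
    and "continuous_on {0..} L"
    and "A > 0"
    and "\<And>x. x \<ge> A \<Longrightarrow> L differentiable (at x)"
    and "((\<lambda>x. x * deriv L x / L x) \<longlongrightarrow> 0) at_top"
    and "p > 0"
    and "(SUP i\<in>I. \<integral>\<^sup>+ \<omega>. ennreal (\<bar>X i \<omega>\<bar> powr p * L \<bar>X i \<omega>\<bar> * Log \<bar>X i \<omega>\<bar>
                                    * (Log (Log \<bar>X i \<omega>\<bar>))\<^sup>2) \<partial>M) < \<infinity>"
  shows "\<exists>(N :: real measure) (Y :: real \<Rightarrow> real).
           prob_space N \<and> Y \<in> borel_measurable N \<and> (\<forall>\<omega>\<in>space N. Y \<omega> \<ge> 0) \<and>
           (\<forall>x::real. measure N {\<omega>\<in>space N. Y \<omega> \<le> x}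
                = 1 - (SUP i\<in>I. measure M {\<omega>\<in>space M. \<bar>X i \<omega>\<bar> > x})) \<and>
           stoch_dominated M I X N Y \<and>
           (\<integral>\<^sup>+ \<omega>. ennreal (Y \<omega> powr p * L (Y \<omega>)) \<partial>N) < \<infinity>"
proof -
  interpret M: prob_space M by fact
  note Xm = assms(3)
  have Lpos: "\<And>x. x \<ge> 0 \<Longrightarrow> L x > 0" by fact
  have p: "p > 0" by fact
  define P where "P i x = measure M {\<omega>\<in>space M. x < \<bar>X i \<omega>\<bar>}" for i x
  define T where "T x = (SUP i\<in>I. P i x)" for x
  have Pset: "{\<omega>\<in>space M. x < \<bar>X i \<omega>\<bar>} \<in> sets M" if "i \<in> I" for i x
    using Xm[OF that] by measurable
  have P01: "0 \<le> P i x" "P i x \<le> 1" for i x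
    unfolding P_def by (auto simp: M.prob_le_1)
  have bdd: "bdd_above ((\<lambda>i. P i x) ` I)" for x
    using P01 by (auto intro: bdd_aboveI[of _ 1])
  have T_ge: "P i x \<le> T x" if "i \<in> I" for i x
    unfolding T_def using bdd that by (rule cSUP_upper2) simp
  have T0: "0 \<le> T x" for x
  proof -
    obtain i where "i \<in> I" using assms(2) by blast
    thus ?thesis using P01[of i x] T_ge[of i x] by linarith
  qed
  have T_le: "T x \<le> c" if "\<And>i. i \<in> I \<Longrightarrow> P i x \<le> c" for x c
    unfolding T_def using assms(2) that by (rule cSUP_least)
  have P_anti: "P i y \<le> P i x" if "i \<in> I" "x \<le> y" for i x y
    unfolding P_def using that by (intro M.finite_measure_mono Pset) auto
  have T_anti: "T y \<le> T x" if "x \<le> y" for x y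
    by (rule T_le) (meson P_anti T_ge order.trans that)
  have T_neg: "T x = 1" if "x < 0" for x
  proof -
    have "P i x = 1" for i
      unfolding P_def using that
      by (subst M.prob_space[symmetric]) (auto intro!: arg_cong[where f="measure M"])
    thus ?thesis unfolding T_def using assms(2) by simp
  qed

  define h where "h y = y powr p * L y" for y
  define \<phi> where "\<phi> y = h y * Log y * (Log (Log y))^2" for y
  obtain B where B: "B > 0" "\<And>x y. B \<le> x \<Longrightarrow> x \<le> y \<Longrightarrow> h x \<le> h y"
    using h_mono[OF Lpos assms(7,8,9,10)] unfolding h_def by blast
  have hpos: "h x > 0" if "x > 0" for x using Lpos[of x] that by (simp add: h_def)
  have hnn: "h x \<ge> 0" if "x \<ge> 0" for x using Lpos[of x] that by (simp add: h_def)
  have Log1: "Log y \<ge> 1" for y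
    unfolding Log_def by (subst ln_ge_iff) (auto simp: less_max_iff_disj)
  have Log0: "Log y \<ge> 0" for y using Log1[of y] by linarith
  have Log_mono: "Log x \<le> Log y" if "x \<le> y" for x y
    unfolding Log_def using that by (subst ln_le_cancel_iff) (auto simp: less_max_iff_disj)
  have phi_mono: "\<phi> x \<le> \<phi> y" if "B \<le> x" "x \<le> y" for x y
  proof -
    have m1: "h x * Log x \<le> h y * Log y"
      using B(2)[OF that] Log_mono[OF that(2)] Log0 hnn[of x] B(1) that
      by (intro mult_mono) auto
    have m2: "(Log (Log x))^2 \<le> (Log (Log y))^2"
      using Log_mono[OF Log_mono[OF that(2)]] Log1[of "Log x"] by (intro power_mono) auto
    show ?thesis unfolding \<phi>_def
      by (rule mult_mono[OF m1 m2]) (use Log0 hnn[of y] B(1) that in auto)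
  qed
  have phipos: "\<phi> x > 0" if "B \<le> x" for x
    unfolding \<phi>_def using hpos[of x] B(1) that Log1[of x] Log1[of "Log x"] by auto
  define Se where "Se = (SUP i\<in>I. \<integral>\<^sup>+ \<omega>. ennreal (\<phi> \<bar>X i \<omega>\<bar>) \<partial>M)"
  have Se_fin: "Se < \<infinity>" using assms(11) unfolding Se_def \<phi>_def h_def by simp
  define S where "S = enn2real Se"
  have Se_eq: "Se = ennreal S" and S0: "S \<ge> 0" using Se_fin unfolding S_def
    by (auto simp: less_top[symmetric] ennreal_enn2real_if)
  have markov: "P i x * \<phi> x \<le> S" if "i \<in> I" "B \<le> x" for i x
  proof -
    let ?A = "{\<omega>\<in>space M. x < \<bar>X i \<omega>\<bar>}"
    have "ennreal (\<phi> x) * indicator ?A \<omega> \<le> ennreal (\<phi> \<bar>X i \<omega>\<bar>)" for \<omega>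
      using phi_mono[of x "\<bar>X i \<omega>\<bar>"] that by (auto split: split_indicator intro: ennreal_leI)
    hence "(\<integral>\<^sup>+ \<omega>. ennreal (\<phi> x) * indicator ?A \<omega> \<partial>M) \<le> (\<integral>\<^sup>+ \<omega>. ennreal (\<phi> \<bar>X i \<omega>\<bar>) \<partial>M)"
      by (intro nn_integral_mono)
    also have "\<dots> \<le> Se" unfolding Se_def using that by (intro SUP_upper)
    finally have "ennreal (\<phi> x) * emeasure M ?A \<le> ennreal S"
      using Pset[OF that(1)] Se_eq by (simp add: nn_integral_cmult_indicator)
    hence "ennreal (\<phi> x * P i x) \<le> ennreal S"
      unfolding P_def using phipos[OF that(2)]
      by (simp add: M.emeasure_eq_measure ennreal_mult)
    thus ?thesis using S0 by (simp add: mult.commute)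
  qed
  have T_bound: "T x \<le> S / \<phi> x" if "B \<le> x" for x
    using markov phipos[OF that] that by (intro T_le) (simp add: pos_le_divide_eq)

  define F where "F x = 1 - T x" for x
  have F_mono: "F x \<le> F y" if "x \<le> y" for x y using T_anti[OF that] by (simp add: F_def)
  have F_bot: "(F \<longlongrightarrow> 0) at_bot"
  proof (rule tendsto_eventually)
    show "eventually (\<lambda>x. F x = 0) at_bot"
      unfolding eventually_at_bot_linorder
      by (intro exI[of _ "-1"]) (auto simp: F_def T_neg)
  qed
  have T_top: "(T \<longlongrightarrow> 0) at_top"
  proof (rule tendsto_sandwich[of "\<lambda>_. 0" _ _ "\<lambda>x. S / (h B * ln x)"])
    show "eventually (\<lambda>x. 0 \<le> T x) at_top"
      using T0 by simp
    show "eventually (\<lambda>x. T x \<le> S / (h B * ln x)) at_top"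
      unfolding eventually_at_top_linorder
    proof (intro exI[of _ "max B 2"] allI impI)
      fix x assume x: "max B 2 \<le> x"
      have lx: "ln x > 0" using x by simp
      have "h B * ln x \<le> \<phi> x"
      proof -
        have "ln x \<le> Log x" unfolding Log_def using x by (subst ln_le_cancel_iff) auto
        hence "h B * ln x \<le> h x * Log x"
          using B(2)[of B x] x hpos[OF B(1)] lx by (intro mult_mono) auto
        also have "\<dots> \<le> h x * Log x * (Log (Log x))^2"
        proof -
          have hxL: "0 \<le> h x * Log x" using Log0[of x] hnn[of x] x by simp
          have "1 \<le> (Log (Log x))^2" using Log1[of "Log x"] by (simp add: one_le_power)
          from mult_left_mono[OF this hxL] show ?thesis by simp
        qed
        finally show ?thesis unfolding \<phi>_def .
      qed
      hence "S / \<phi> x \<le> S / (h B * ln x)"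
        using S0 hpos[OF B(1)] lx phipos[of x] x by (intro divide_left_mono) auto
      thus "T x \<le> S / (h B * ln x)" using T_bound[of x] x by simp
    qed
    show "((\<lambda>x. S / (h B * ln x)) \<longlongrightarrow> 0) at_top"
      by (intro tendsto_divide_0[OF tendsto_const] filterlim_at_top_imp_at_infinity
            filterlim_tendsto_pos_mult_at_top[OF tendsto_const hpos[OF B(1)] ln_at_top])
  qed simp
  have F_top: "(F \<longlongrightarrow> 1) at_top"
    unfolding F_def using tendsto_diff[OF tendsto_const T_top, of 1] by simp
  have P_rc: "((\<lambda>y. P i y) \<longlongrightarrow> P i a) (at_right a)" if i: "i \<in> I" for i a
  proof -
    define D where "D = distr M borel (\<lambda>\<omega>. \<bar>X i \<omega>\<bar>)"
    have "(\<lambda>\<omega>. \<bar>X i \<omega>\<bar>) \<in> borel_measurable M" using Xm[OF i] by (rule borel_measurable_abs)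
    hence rd: "real_distribution D" unfolding D_def by (rule M.real_distribution_distr)
    have eq: "P i y = 1 - cdf D y" for y
    proof -
      have "cdf D y = measure M ((\<lambda>\<omega>. \<bar>X i \<omega>\<bar>) -` {..y} \<inter> space M)"
        unfolding cdf_def D_def using Xm[OF i]
        by (subst measure_distr) auto
      moreover have "{\<omega>\<in>space M. y < \<bar>X i \<omega>\<bar>} = space M - ((\<lambda>\<omega>. \<bar>X i \<omega>\<bar>) -` {..y} \<inter> space M)"
        by auto
      moreover have "((\<lambda>\<omega>. \<bar>X i \<omega>\<bar>) -` {..y} \<inter> space M) \<in> sets M"
        using Xm[OF i] by measurable
      ultimately show ?thesis unfolding P_def by (simp add: M.prob_compl)
    qed
    have "continuous (at_right a) (cdf D)"
      using rd by (intro finite_borel_measure.cdf_is_right_cont real_distribution.finite_borel_measure_M)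
    hence "(cdf D \<longlongrightarrow> cdf D a) (at_right a)" by (simp add: continuous_within)
    hence "((\<lambda>y. 1 - cdf D y) \<longlongrightarrow> 1 - cdf D a) (at_right a)"
      by (intro tendsto_diff tendsto_const)
    thus ?thesis by (simp add: eq)
  qed
  have F_rc: "continuous (at_right a) F" for a
    unfolding continuous_within
  proof (rule order_tendstoI)
    fix b assume b: "b < F a"
    show "eventually (\<lambda>y. b < F y) (at_right a)"
    proof (rule eventually_mono[OF eventually_at_right_less[of a]])
      fix y assume "a < y" thus "b < F y" using F_mono[of a y] b by linarith
    qed
  next
    fix b assume b: "F a < b"
    hence "1 - b < T a" by (simp add: F_def)
    then obtain i where i: "i \<in> I" "1 - b < P i a"
      using less_cSUP_iff[OF assms(2) bdd[of a], of "1 - b"] unfolding T_def by blast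
    have "eventually (\<lambda>y. 1 - b < P i y) (at_right a)"
      by (rule order_tendstoD(1)[OF P_rc[OF i(1)] i(2)])
    thus "eventually (\<lambda>y. F y < b) (at_right a)"
    proof (rule eventually_mono)
      fix y assume "1 - b < P i y" thus "F y < b" using T_ge[OF i(1), of y] by (simp add: F_def)
    qed
  qed
  define N where "N = interval_measure F"
  have rdN: "real_distribution N"
    unfolding N_def using F_mono F_rc F_bot F_top by (rule real_distribution_interval_measure)
  interpret N: real_distribution N by (rule rdN)
  have N_le: "measure N {..x} = F x" for x
    unfolding N_def using F_mono F_rc F_bot by (rule measure_interval_measure_Iic)
  have N_gt: "measure N {x<..} = T x" for x
  proof -
    have "{x<..} = space N - {..x}" by auto
    hence "measure N {x<..} = 1 - measure N {..x}"
      using N.prob_compl[of "{..x}"] by simp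
    thus ?thesis by (simp add: N_le F_def)
  qed
  define Y where "Y \<omega> = max 0 \<omega>" for \<omega> :: real
  have Ymeas: "Y \<in> borel_measurable N"
    unfolding Y_def[abs_def] by (rule N.measurable_finite_borel) measurable
  have "(\<integral>\<^sup>+ \<omega>. ennreal (Y \<omega> powr p * L (Y \<omega>)) \<partial>N) < \<infinity>"
  proof -
    have slow: "((\<lambda>x. L (exp 1 * x) / L x) \<longlongrightarrow> 1) at_top"
      using assms(4) unfolding slowly_varying_def by auto
    obtain Z where Z: "\<And>x. x \<ge> Z \<Longrightarrow> L (exp 1 * x) / L x < 2"
      using order_tendstoD(2)[OF slow, of 2] by (auto simp: eventually_at_top_linorder)
    define m0 :: nat where "m0 = nat \<lceil>max B Z\<rceil> + 3"
    have m0le: "max B Z \<le> real m0" unfolding m0_def by linarith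
    have "real m0 \<le> exp (real m0)" using exp_ge_add_one_self[of "real m0"] by linarith
    hence m0: "B \<le> exp (real m0)" "Z \<le> exp (real m0)" "3 \<le> m0"
      using m0le by (auto simp: m0_def)
    have em: "exp (real m0) \<le> exp (real (m0 + k))" for k by simp
    have "\<exists>x\<in>{0..exp (real m0)}. \<forall>y\<in>{0..exp (real m0)}. L y \<le> L x"
      by (rule continuous_attains_sup) (auto intro: continuous_on_subset[OF assms(6)])
    then obtain c where c: "c \<in> {0..exp (real m0)}" "\<And>y. y \<in> {0..exp (real m0)} \<Longrightarrow> L y \<le> L c"
      by blast
    define K where "K = exp (real m0) powr p * L c"
    have hK: "h y \<le> K" if "0 \<le> y" "y \<le> exp (real m0)" for y
      unfolding h_def K_def using c(2)[of y] that Lpos[of y] p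
      by (intro mult_mono powr_mono2) auto
    define a where "a k = h (exp 1 * exp (real (m0 + k)))" for k
    have a0: "a k \<ge> 0" for k unfolding a_def by (intro hnn) simp
    define E where "E k = {exp (real (m0 + k))<..}" for k
    have Emeas: "E k \<in> sets N" for k by (simp add: E_def)
    have pw: "ennreal (Y \<omega> powr p * L (Y \<omega>)) \<le> ennreal K + (\<Sum>k. ennreal (a k) * indicator (E k) \<omega>)" for \<omega>
    proof (cases "Y \<omega> \<le> exp (real m0)")
      case True
      hence "Y \<omega> powr p * L (Y \<omega>) \<le> K" using hK[of "Y \<omega>"] by (simp add: h_def Y_def)
      thus ?thesis by (intro add_increasing2 ennreal_leI) auto
    next
      case False
      define y where "y = Y \<omega>"
      have y: "exp (real m0) < y" using False y_def by simp
      have ypos: "y > 0" using y exp_gt_zero[of "real m0"] by linarith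
      have yom: "\<omega> = y" using ypos unfolding y_def Y_def by (auto simp: max_def split: if_splits)
      have lny: "real m0 < ln y" using y ypos by (metis ln_exp ln_less_cancel_iff exp_gt_zero)
      have cl: "of_int \<lceil>ln y\<rceil> - 1 < ln y" "ln y \<le> of_int \<lceil>ln y\<rceil>" by linarith+
      have c2: "\<lceil>ln y\<rceil> \<ge> int m0 + 1" using lny by linarith
      define m where "m = nat \<lceil>ln y\<rceil> - 1"
      have rm: "real m = of_int \<lceil>ln y\<rceil> - 1" using c2 unfolding m_def by (simp add: of_nat_diff)
      have m1: "real m < ln y" "ln y \<le> real m + 1" "m0 \<le> m" using cl c2 rm by linarith+
      define k where "k = m - m0"
      have mk: "m0 + k = m" using m1 by (simp add: k_def)
      have "exp (real m) < y" using m1 ypos by (metis exp_less_cancel_iff exp_ln)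
      hence inE: "indicator (E k) \<omega> = (1::ennreal)" using yom mk by (simp add: E_def)
      have "y = exp (ln y)" using ypos by simp
      also have "\<dots> \<le> exp (real m + 1)" using m1 by simp
      finally have "y \<le> exp 1 * exp (real m)" by (simp add: exp_add mult.commute)
      hence "h y \<le> a k" unfolding a_def mk using B(2)[of y] m0(1) y by simp
      hence "ennreal (Y \<omega> powr p * L (Y \<omega>)) \<le> ennreal (a k) * indicator (E k) \<omega>"
        using inE by (simp add: h_def y_def ennreal_leI)
      also have "\<dots> \<le> (\<Sum>k. ennreal (a k) * indicator (E k) \<omega>)"
        by (rule ennreal_term_le_suminf)
      also have "\<dots> \<le> ennreal K + (\<Sum>k. ennreal (a k) * indicator (E k) \<omega>)"
        by (rule add_increasing) auto
      finally show ?thesis .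
    qed
    define bnd where "bnd k = a k * (S / \<phi> (exp (real (m0 + k))))" for k
    have bnd0: "bnd k \<ge> 0" for k
    proof -
      have "\<phi> (exp (real (m0 + k))) > 0" using phipos m0(1) em[of k] order.trans by blast
      thus ?thesis unfolding bnd_def using a0[of k] S0 by simp
    qed
    have bnd_le: "bnd k \<le> 8 * exp p * S * (1 / (real (k + m0) * (ln (real (k + m0)) + 1)^2))" for k
    proof -
      define m where "m = real (k + m0)"
      define x where "x = exp m"
      have mge: "3 \<le> m" using m0(3) by (simp add: m_def)
      have "exp (real m0) \<le> x" unfolding x_def m_def by simp
      hence xge: "Z \<le> x" "B \<le> x" using m0(1,2) by linarith+
      have xpos: "x > 0" by (simp add: x_def)
      have Lx: "L x > 0" using Lpos xpos by simp
      have hx: "h x > 0" using hpos xpos by simp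
      have ratio: "L (exp 1 * x) < 2 * L x" using Z[OF xge(1)] Lx by (simp add: field_simps)
      have e1p: "exp 1 powr p = exp p" by (simp add: powr_def)
      have ak: "a k = exp p * x powr p * L (exp 1 * x)"
        unfolding a_def h_def x_def m_def using e1p by (simp add: powr_mult add.commute)
      have "a k \<le> exp p * x powr p * (2 * L x)"
        unfolding ak by (rule mult_left_mono) (use ratio in auto)
      hence a_le: "a k \<le> 2 * exp p * h x" by (simp add: h_def algebra_simps)
      have e3: "exp 1 \<le> m" using exp_le mge by linarith
      have Logx: "Log x = m"
      proof -
        have "exp 1 \<le> x" unfolding x_def using e3 mge by simp
        thus ?thesis unfolding Log_def x_def by (simp add: max_def)
      qed
      have LogLog: "Log m = ln m" unfolding Log_def using e3 by (simp add: max_def)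
      have lm: "1 \<le> ln m" using e3 mge by (subst ln_ge_iff) auto
      have phix: "\<phi> x = h x * m * (ln m)^2" unfolding \<phi>_def Logx LogLog by simp
      have mpos: "m > 0" using mge by simp
      have lpos: "ln m > 0" "ln m + 1 > 0" using lm by linarith+
      have D: "m * (ln m)^2 > 0" using mpos lpos(1) by (meson mult_pos_pos zero_less_power)
      have D': "m * (ln m + 1)^2 > 0" using mpos lpos(2) by (meson mult_pos_pos zero_less_power)
      have sq1: "(ln m + 1)^2 = (ln m)^2 + 2 * ln m + 1" by (simp add: power2_eq_square algebra_simps)
      have sq2: "(3 * ln m + 1) * (ln m - 1) = 3 * (ln m)^2 - 2 * ln m - 1"
        by (simp add: power2_eq_square algebra_simps)
      have "0 \<le> (3 * ln m + 1) * (ln m - 1)" using lm by (intro mult_nonneg_nonneg) auto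
      hence q: "(ln m + 1)^2 \<le> 4 * (ln m)^2" using sq1 sq2 by linarith
      hence qD: "m * (ln m + 1)^2 \<le> 4 * (m * (ln m)^2)" using mpos by simp
      have "bnd k = a k * (S / \<phi> x)" by (simp add: bnd_def x_def m_def add.commute)
      also have "\<dots> \<le> 2 * exp p * h x * (S / \<phi> x)"
        using a_le S0 phipos[OF xge(2)] by (intro mult_right_mono) auto
      also have "\<dots> = (2 * exp p * S) / (m * (ln m)^2)"
        unfolding phix using hx mpos D by (simp add: field_simps)
      also have "\<dots> = (4 * (2 * exp p * S)) / (4 * (m * (ln m)^2))" by simp
      also have "\<dots> \<le> (4 * (2 * exp p * S)) / (m * (ln m + 1)^2)"
        using qD D' S0 by (intro divide_left_mono) auto
      also have "\<dots> = 8 * exp p * S * (1 / (real (k + m0) * (ln (real (k + m0)) + 1)^2))"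
        by (simp add: m_def)
      finally show ?thesis .
    qed
    have bnd_sum: "summable bnd"
    proof (rule summable_comparison_test'[where N=0])
      show "summable (\<lambda>k. 8 * exp p * S * (1 / (real (k + m0) * (ln (real (k + m0)) + 1)^2)))"
      proof (intro summable_mult)
        have "summable (\<lambda>k. (\<lambda>m::nat. 1 / (real m * (ln (real m) + 1)^2)) (k + m0))"
          by (subst summable_iff_shift) (rule summable_loglog)
        thus "summable (\<lambda>k. 1 / (real (k + m0) * (ln (real (k + m0)) + 1)^2))" by simp
      qed
      show "norm (bnd k) \<le> 8 * exp p * S * (1 / (real (k + m0) * (ln (real (k + m0)) + 1)^2))" for k
        using bnd0[of k] bnd_le[of k] by simp
    qed
    have "(\<integral>\<^sup>+ \<omega>. ennreal (Y \<omega> powr p * L (Y \<omega>)) \<partial>N)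
          \<le> (\<integral>\<^sup>+ \<omega>. ennreal K + (\<Sum>k. ennreal (a k) * indicator (E k) \<omega>) \<partial>N)"
      by (intro nn_integral_mono pw)
    also have "\<dots> = (\<integral>\<^sup>+ \<omega>. ennreal K \<partial>N) + (\<integral>\<^sup>+ \<omega>. (\<Sum>k. ennreal (a k) * indicator (E k) \<omega>) \<partial>N)"
      using Emeas by (intro nn_integral_add) auto
    also have "(\<integral>\<^sup>+ \<omega>. ennreal K \<partial>N) = ennreal K"
      using N.emeasure_space_1 by simp
    also have "(\<integral>\<^sup>+ \<omega>. (\<Sum>k. ennreal (a k) * indicator (E k) \<omega>) \<partial>N)
               = (\<Sum>k. ennreal (a k) * emeasure N (E k))"
      using Emeas by (subst nn_integral_suminf) (auto simp: nn_integral_cmult_indicator)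
    also have "\<dots> \<le> (\<Sum>k. ennreal (bnd k))"
    proof (intro suminf_le summableI)
      fix k
      define x where "x = exp (real (m0 + k))"
      have e1: "emeasure N (E k) = ennreal (T x)" by (simp add: N.emeasure_eq_measure E_def N_gt x_def)
      have "T x \<le> S / \<phi> x"
        using T_bound m0(1) em[of k] unfolding x_def by (meson order.trans)
      hence "a k * T x \<le> a k * (S / \<phi> x)" using a0[of k] by (rule mult_left_mono)
      moreover have "bnd k = a k * (S / \<phi> x)" by (simp add: bnd_def x_def)
      ultimately have "ennreal (a k * T x) \<le> ennreal (bnd k)" by (simp add: ennreal_leI)
      thus "ennreal (a k) * emeasure N (E k) \<le> ennreal (bnd k)"
        using e1 a0[of k] T0[of x] by (simp add: ennreal_mult)
    qed
    also have "(\<Sum>k. ennreal (bnd k)) = ennreal (\<Sum>k. bnd k)"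
      using bnd0 bnd_sum by (rule suminf_ennreal2)
    finally show ?thesis by (simp add: ennreal_plus[symmetric] order_le_less_trans)
  qed
  moreover have "measure N {\<omega>\<in>space N. Y \<omega> \<le> x} = 1 - T x" for x
  proof (cases "x < 0")
    case True
    hence "{\<omega>\<in>space N. Y \<omega> \<le> x} = {}" by (auto simp: Y_def)
    thus ?thesis using T_neg[OF True] by simp
  next
    case False
    hence "{\<omega>\<in>space N. Y \<omega> \<le> x} = {..x}" by (auto simp: Y_def)
    thus ?thesis by (simp add: N_le F_def)
  qed
  moreover have "stoch_dominated M I X N Y"
    unfolding stoch_dominated_def
  proof (intro allI impI)
    fix t :: real assume t: "t \<ge> 0"
    have "{\<omega>\<in>space N. \<bar>Y \<omega>\<bar> > t} = {t<..}" using t by (auto simp: Y_def)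
    thus "(SUP i\<in>I. measure M {\<omega>\<in>space M. \<bar>X i \<omega>\<bar> > t}) \<le> measure N {\<omega>\<in>space N. \<bar>Y \<omega>\<bar> > t}"
      using N_gt[of t] by (simp add: T_def P_def)
  qed
  moreover have "prob_space N" by (rule N.prob_space_axioms)
  moreover have "\<forall>\<omega>\<in>space N. Y \<omega> \<ge> 0" by (simp add: Y_def)
  ultimately show ?thesis using Ymeas unfolding T_def P_def by blast
qed

end
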